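(* In the Ewens setting, let $\Delta W(N,k)=W(N,k+1)-W(N,k)$ for $0\le k\le N-2$. Then for every $k\ge0$: $$\Delta W(k+2,k)=\theta\,(\theta-(k+1))\,[k]_\theta,$$ and for all $N\ge k+3$, $$\Delta W(N,k)=(N-1)\,\Delta W(N-1,k)+\theta^2\,\frac{(N-2)!}{k!}\,[k]_\theta.$$
   Context: Permutations of $\{1,\dots,N\}$ are written in one-line notation; $\mathfrak S_N$ is the set of all of them. An entry $\pi_j$ is a left-to-right maximum if $\pi_j>\pi_i$ for all $i<j$; $\mathrm{lrm}(\pi)$ is the number of left-to-right maxima. Let $\theta>0$. For $0\le k\le N-1$, a permutation $\pi\in\mathfrak S_N$ is $k$-winnable if the first index $j>k$ such that $\pi_j$ is a left-to-right maximum satisfies $\pi_j=N$. Ewens setting: $W(N,k)=\sum_{k\text{-winnable }\pi\in\mathfrak S_N}\theta^{\mathrm{lrm}(\pi)}$, with $W(N,N):=0$, and $[m]_\theta=\theta(\theta+1)\cdots(\theta+m-1)$ with $[0]_\theta=1$. *)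

theory Defs
  imports Complex_Main "HOL-Combinatorics.Permutations"
begin

text \<open>Permutations of {1..N} in one-line notation: a bijection p with p permutes {1..N};
  the entry at position j is p j.\<close>

definition is_lrm :: "(nat \<Rightarrow> nat) \<Rightarrow> nat \<Rightarrow> bool" where
  "is_lrm p j \<longleftrightarrow> (\<forall>i. 1 \<le> i \<and> i < j \<longrightarrow> p i < p j)"

definition lrm :: "nat \<Rightarrow> (nat \<Rightarrow> nat) \<Rightarrow> nat" where
  "lrm N p = card {j \<in> {1..N}. is_lrm p j}"

definition winnable :: "nat \<Rightarrow> nat \<Rightarrow> (nat \<Rightarrow> nat) \<Rightarrow> bool" where
  "winnable N k p \<longleftrightarrow>
     (\<exists>j. k < j \<and> j \<le> N \<and> is_lrm p j \<and>
          (\<forall>i. k < i \<and> i < j \<longrightarrow> \<not> is_lrm p i) \<and> p j = N)"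

definition W :: "real \<Rightarrow> nat \<Rightarrow> nat \<Rightarrow> real" where
  "W \<theta> N k = (if k < N then
      (\<Sum>p\<in>{p. p permutes {1..N} \<and> winnable N k p}. \<theta> ^ lrm N p) else 0)"

definition DeltaW :: "real \<Rightarrow> nat \<Rightarrow> nat \<Rightarrow> real" where
  "DeltaW \<theta> N k = W \<theta> N (k + 1) - W \<theta> N k"

end

theory Submission
  imports Defs
begin

definition Bs :: "nat \<Rightarrow> nat set \<Rightarrow> (nat \<Rightarrow> nat) set" where
  "Bs n S = {p. bij_betw p {1..n} S \<and> (\<forall>i. i \<notin> {1..n} \<longrightarrow> p i = i)}"

lemma Bs_finite:
  assumes "finite S" shows "finite (Bs n S)"
proof -
  have "inj_on (\<lambda>p. restrict p {1..n}) (Bs n S)"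
  proof (rule inj_onI)
    fix p q assume p: "p \<in> Bs n S" and q: "q \<in> Bs n S"
      and e: "restrict p {1..n} = restrict q {1..n}"
    show "p = q"
    proof
      fix x show "p x = q x"
        using p q fun_cong[OF e, of x] by (cases "x \<in> {1..n}") (auto simp: Bs_def)
    qed
  qed
  moreover have "(\<lambda>p. restrict p {1..n}) ` Bs n S \<subseteq> PiE {1..n} (\<lambda>_. S)"
    by (auto simp: Bs_def bij_betw_def)
  moreover have "finite (PiE {1..n} (\<lambda>_. S))" using assms by (simp add: finite_PiE)
  ultimately show ?thesis by (meson finite_imageD finite_subset)
qed

lemma Bs_Suc:
  "Bs (Suc n) S = (\<lambda>(v,q). q(Suc n := v)) ` (SIGMA v:S. Bs n (S - {v}))"
proof
  show "Bs (Suc n) S \<subseteq> (\<lambda>(v,q). q(Suc n := v)) ` (SIGMA v:S. Bs n (S - {v}))"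
  proof
    fix p assume p: "p \<in> Bs (Suc n) S"
    define v where "v = p (Suc n)"
    define q where "q = p(Suc n := Suc n)"
    have bij: "bij_betw p {1..Suc n} S" and out: "\<forall>i. i \<notin> {1..Suc n} \<longrightarrow> p i = i"
      using p by (auto simp: Bs_def)
    have inj: "inj_on p {1..Suc n}" and im: "p ` {1..Suc n} = S" using bij by (auto simp: bij_betw_def)
    have vS: "v \<in> S" using im v_def by auto
    have "q ` {1..n} = p ` {1..n}" by (auto simp: q_def)
    also have "\<dots> = S - {v}"
    proof -
      have e: "{1..n} = {1..Suc n} - {Suc n}" by auto
      have "p ` ({1..Suc n} - {Suc n}) = p ` {1..Suc n} - p ` {Suc n}"
        by (rule inj_on_image_set_diff[OF inj]) auto
      then show ?thesis unfolding e im v_def by simp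
    qed
    finally have qim: "q ` {1..n} = S - {v}" .
    have qinj: "inj_on q {1..n}" using inj by (auto simp: inj_on_def q_def)
    have qout: "\<forall>i. i \<notin> {1..n} \<longrightarrow> q i = i" using out by (auto simp: q_def)
    have "q \<in> Bs n (S - {v})" using qim qinj qout by (auto simp: Bs_def bij_betw_def)
    moreover have "p = q(Suc n := v)" by (auto simp: q_def v_def)
    ultimately show "p \<in> (\<lambda>(v,q). q(Suc n := v)) ` (SIGMA v:S. Bs n (S - {v}))"
      using vS by (intro image_eqI[where x="(v,q)"]) auto
  qed
next
  show "(\<lambda>(v,q). q(Suc n := v)) ` (SIGMA v:S. Bs n (S - {v})) \<subseteq> Bs (Suc n) S"
  proof
    fix p assume "p \<in> (\<lambda>(v,q). q(Suc n := v)) ` (SIGMA v:S. Bs n (S - {v}))"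
    then obtain v q where vS: "v \<in> S" and q: "q \<in> Bs n (S - {v})" and pd: "p = q(Suc n := v)"
      by auto
    have inj: "inj_on q {1..n}" and im: "q ` {1..n} = S - {v}" and out: "\<forall>i. i \<notin> {1..n} \<longrightarrow> q i = i"
      using q by (auto simp: Bs_def bij_betw_def)
    have s: "{1..Suc n} = insert (Suc n) {1..n}" by auto
    have vn: "v \<notin> q ` {1..n}" using im by auto
    have img: "(q(Suc n := v)) ` {1..n} = q ` {1..n}" by auto
    have "inj_on (q(Suc n := v)) {1..n} = inj_on q {1..n}" by (rule inj_on_cong) auto
    then have i1: "inj_on (q(Suc n := v)) {1..n}" using inj by simp
    have d: "{1..n} - {Suc n} = {1..n}" by auto
    have "inj_on (q(Suc n := v)) {1..Suc n}"
      unfolding s inj_on_insert d img using i1 vn by simp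
    moreover have "(q(Suc n := v)) ` {1..Suc n} = S" unfolding s image_insert img im using vS by auto
    moreover have "\<forall>i. i \<notin> {1..Suc n} \<longrightarrow> (q(Suc n := v)) i = i" using out by auto
    ultimately show "p \<in> Bs (Suc n) S" unfolding pd Bs_def bij_betw_def by blast
  qed
qed

lemma Bs_Suc_inj:
  "inj_on (\<lambda>(v,q). q(Suc n := v)) (SIGMA v:S. Bs n (S - {v}))"
proof (rule inj_onI, clarify)
  fix v q w r assume q: "q \<in> Bs n (S - {v})" and r: "r \<in> Bs n (S - {w})"
    and e: "q(Suc n := v) = r(Suc n := w)"
  have "v = w" using fun_cong[OF e, of "Suc n"] by simp
  moreover have "q = r"
  proof
    fix x show "q x = r x"
    proof (cases "x = Suc n")
      case True then show ?thesis using q r by (auto simp: Bs_def)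
    next
      case False then show ?thesis using fun_cong[OF e, of x] by simp
    qed
  qed
  ultimately show "v = w \<and> q = r" by simp
qed

lemma sum_Bs_Suc:
  assumes "finite S"
  shows "(\<Sum>p\<in>Bs (Suc n) S. g p) = (\<Sum>v\<in>S. \<Sum>q\<in>Bs n (S - {v}). g (q(Suc n := v)))"
proof -
  have "(\<Sum>p\<in>Bs (Suc n) S. g p) = (\<Sum>x\<in>(SIGMA v:S. Bs n (S - {v})). g ((\<lambda>(v,q). q(Suc n := v)) x))"
    unfolding Bs_Suc by (rule sum.reindex[OF Bs_Suc_inj, unfolded comp_def])
  also have "\<dots> = (\<Sum>x\<in>(SIGMA v:S. Bs n (S - {v})). (\<lambda>(v,q). g (q(Suc n := v))) x)"
    by (intro sum.cong refl) (auto simp: case_prod_unfold)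
  also have "\<dots> = (\<Sum>v\<in>S. \<Sum>q\<in>Bs n (S - {v}). g (q(Suc n := v)))"
    using assms by (subst sum.Sigma) (auto simp: Bs_finite)
  finally show ?thesis .
qed

lemma is_lrm_upd: "j \<le> n \<Longrightarrow> is_lrm (q(Suc n := v)) j = is_lrm q j"
  by (auto simp: is_lrm_def)

lemma is_lrm_last:
  assumes "finite S" "v \<in> S" "q \<in> Bs n (S - {v})"
  shows "is_lrm (q(Suc n := v)) (Suc n) \<longleftrightarrow> v = Max S"
proof -
  have im: "q ` {1..n} = S - {v}" using assms(3) by (auto simp: Bs_def bij_betw_def)
  have "is_lrm (q(Suc n := v)) (Suc n) \<longleftrightarrow> (\<forall>x \<in> S - {v}. x < v)"
    unfolding is_lrm_def im[symmetric] by auto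
  also have "\<dots> \<longleftrightarrow> v = Max S"
  proof
    assume h: "\<forall>x\<in>S - {v}. x < v"
    have "\<forall>y\<in>S. y \<le> v" using h by (metis Diff_iff empty_iff insert_iff less_imp_le_nat order_refl)
    then show "v = Max S" using assms by (intro Max_eqI[symmetric]) auto
  next
    assume "v = Max S"
    then show "\<forall>x\<in>S - {v}. x < v" using assms(1,2)
      by (metis DiffE Max_ge insertI1 le_neq_implies_less)
  qed
  finally show ?thesis .
qed

lemma lrm_upd:
  "lrm (Suc n) (q(Suc n := v)) = lrm n q + (if is_lrm (q(Suc n := v)) (Suc n) then 1 else 0)"
proof -
  have "{j \<in> {1..Suc n}. is_lrm (q(Suc n := v)) j} =
        {j \<in> {1..n}. is_lrm q j} \<union> (if is_lrm (q(Suc n := v)) (Suc n) then {Suc n} else {})"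
    by (auto simp: is_lrm_upd le_Suc_eq)
  then show ?thesis unfolding lrm_def by (simp add: card_insert_if)
qed

context
  fixes t :: real
begin

definition Tg :: "nat \<Rightarrow> nat set \<Rightarrow> real" where
  "Tg n S = (\<Sum>p\<in>Bs n S. t ^ lrm n p)"

definition nol :: "nat \<Rightarrow> nat \<Rightarrow> (nat \<Rightarrow> nat) \<Rightarrow> bool" where
  "nol k n p \<longleftrightarrow> (\<forall>i. k < i \<and> i \<le> n \<longrightarrow> \<not> is_lrm p i)"

definition Ag :: "nat \<Rightarrow> nat \<Rightarrow> nat set \<Rightarrow> real" where
  "Ag k n S = (\<Sum>p\<in>Bs n S. if nol k n p then t ^ lrm n p else 0)"

definition wg :: "nat \<Rightarrow> nat \<Rightarrow> nat set \<Rightarrow> (nat \<Rightarrow> nat) \<Rightarrow> bool" where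
  "wg k n S p \<longleftrightarrow> (\<exists>j. k < j \<and> j \<le> n \<and> is_lrm p j \<and>
          (\<forall>i. k < i \<and> i < j \<longrightarrow> \<not> is_lrm p i) \<and> p j = Max S)"

definition Wg :: "nat \<Rightarrow> nat \<Rightarrow> nat set \<Rightarrow> real" where
  "Wg k n S = (\<Sum>p\<in>Bs n S. if wg k n S p then t ^ lrm n p else 0)"

fun Ac :: "nat \<Rightarrow> nat \<Rightarrow> real" where
  "Ac k 0 = 1"
| "Ac k (Suc n) = (if Suc n \<le> k then pochhammer t (Suc n) else real n * Ac k n)"

fun Wc :: "nat \<Rightarrow> nat \<Rightarrow> real" where
  "Wc k 0 = 0"
| "Wc k (Suc n) = (if k \<le> n then t * Ac k n + real n * Wc k n else 0)"

lemma Bs_0: "Bs 0 S = (if S = {} then {id} else {})"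
  by (auto simp: Bs_def bij_betw_def fun_eq_iff)

lemma sum_Max_split:
  assumes "finite S" "S \<noteq> {}"
  shows "(\<Sum>v\<in>S. f v) = f (Max S) + (\<Sum>v\<in>S - {Max S}. f v)"
  using assms by (simp add: sum.remove)

lemma Tg_eq: "finite S \<Longrightarrow> card S = n \<Longrightarrow> Tg n S = pochhammer t n"
proof (induction n arbitrary: S)
  case 0 then show ?case by (simp add: Tg_def Bs_0 lrm_def)
next
  case (Suc n)
  have ne: "S \<noteq> {}" using Suc.prems by auto
  have "Tg (Suc n) S = (\<Sum>v\<in>S. \<Sum>q\<in>Bs n (S - {v}). t ^ lrm (Suc n) (q(Suc n := v)))"
    unfolding Tg_def using Suc.prems by (simp add: sum_Bs_Suc)
  also have "\<dots> = (\<Sum>v\<in>S. (if v = Max S then t else 1) * Tg n (S - {v}))"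
    unfolding Tg_def
  proof (intro sum.cong refl)
    fix v assume v: "v \<in> S"
    show "(\<Sum>q\<in>Bs n (S - {v}). t ^ lrm (Suc n) (q(Suc n := v))) =
      (if v = Max S then t else 1) * (\<Sum>p\<in>Bs n (S - {v}). t ^ lrm n p)"
      unfolding sum_distrib_left
      by (rule sum.cong[OF refl]) (auto simp: lrm_upd is_lrm_last[OF Suc.prems(1) v])
  qed
  also have "\<dots> = (\<Sum>v\<in>S. (if v = Max S then t else 1) * pochhammer t n)"
    by (intro sum.cong refl) (use Suc.prems Suc.IH in auto)
  also have "\<dots> = t * pochhammer t n + (\<Sum>v\<in>S - {Max S}. pochhammer t n)"
    using Suc.prems ne by (subst sum_Max_split) auto
  also have "\<dots> = pochhammer t (Suc n)"
    using Suc.prems ne by (simp add: pochhammer_Suc algebra_simps)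
  finally show ?case .
qed

lemma Ac_le: "n \<le> k \<Longrightarrow> Ac k n = pochhammer t n"
  by (cases n) auto

lemma Ag_eq: "finite S \<Longrightarrow> card S = n \<Longrightarrow> Ag k n S = Ac k n"
proof (induction n arbitrary: S)
  case 0 then show ?case by (simp add: Ag_def Bs_0 lrm_def nol_def)
next
  case (Suc n)
  have ne: "S \<noteq> {}" using Suc.prems by auto
  show ?case
  proof (cases "Suc n \<le> k")
    case True
    then have "Ag k (Suc n) S = Tg (Suc n) S" unfolding Ag_def Tg_def nol_def by (intro sum.cong refl) auto
    then show ?thesis using True Tg_eq Suc.prems by simp
  next
    case False
    have "Ag k (Suc n) S = (\<Sum>v\<in>S. \<Sum>q\<in>Bs n (S - {v}).
        if nol k (Suc n) (q(Suc n := v)) then t ^ lrm (Suc n) (q(Suc n := v)) else 0)"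
      unfolding Ag_def using Suc.prems by (simp add: sum_Bs_Suc)
    also have "\<dots> = (\<Sum>v\<in>S. if v = Max S then 0 else Ag k n (S - {v}))"
      unfolding Ag_def
    proof (intro sum.cong refl)
      fix v assume v: "v \<in> S"
      have "nol k (Suc n) (q(Suc n := v)) \<longleftrightarrow> nol k n q \<and> v \<noteq> Max S"
        if q: "q \<in> Bs n (S - {v})" for q
      proof -
        have L: "is_lrm (q(Suc n := v)) (Suc n) \<longleftrightarrow> v = Max S"
          by (rule is_lrm_last[OF Suc.prems(1) v q])
        have "nol k (Suc n) (q(Suc n := v)) \<longleftrightarrow> nol k n q \<and> \<not> is_lrm (q(Suc n := v)) (Suc n)"
          using False unfolding nol_def by (auto simp: is_lrm_upd le_Suc_eq)
        then show ?thesis using L by simp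
      qed
      then show "(\<Sum>q\<in>Bs n (S - {v}). if nol k (Suc n) (q(Suc n := v)) then t ^ lrm (Suc n) (q(Suc n := v)) else 0)
          = (if v = Max S then 0 else \<Sum>p\<in>Bs n (S - {v}). if nol k n p then t ^ lrm n p else 0)"
        using is_lrm_last[OF Suc.prems(1) v] by (auto simp: lrm_upd intro!: sum.cong)
    qed
    also have "\<dots> = (\<Sum>v\<in>S - {Max S}. Ac k n)"
    proof -
      have IHc: "Ag k n (S - {v}) = Ac k n" if "v \<in> S" for v
        using Suc.prems that by (intro Suc.IH) auto
      show ?thesis using Suc.prems ne IHc by (subst sum_Max_split) auto
    qed
    also have "\<dots> = Ac k (Suc n)" using False Suc.prems ne by simp
    finally show ?thesis .
  qed
qed

lemma Max_remove: "finite S \<Longrightarrow> v \<in> S \<Longrightarrow> v \<noteq> Max S \<Longrightarrow> Max (S - {v}) = Max S"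
proof -
  assume a: "finite S" "v \<in> S" "v \<noteq> Max S"
  have ne: "S - {v} \<noteq> {}"
  proof
    assume "S - {v} = {}" then have "S = {v}" using a(2) by auto
    then show False using a(3) by simp
  qed
  have e: "insert v (S - {v}) = S" using a by auto
  have "Max (insert v (S - {v})) = max v (Max (S - {v}))"
    by (rule Max_insert) (use a ne in auto)
  then have m: "Max S = max v (Max (S - {v}))" unfolding e .
  show ?thesis
  proof (cases "Max (S - {v}) \<le> v")
    case True then show ?thesis using m a(3) by (simp add: max_def)
  next
    case False
    then have h: "max v (Max (S - {v})) = Max (S - {v})" by (simp add: max_absorb2)
    show ?thesis using trans[OF m h] by (rule sym)
  qed
qed

lemma Wg_eq: "finite S \<Longrightarrow> card S = n \<Longrightarrow> Wg k n S = Wc k n"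
proof (induction n arbitrary: S)
  case 0 then show ?case by (simp add: Wg_def wg_def)
next
  case (Suc n)
  have ne: "S \<noteq> {}" using Suc.prems by auto
  show ?case
  proof (cases "k \<le> n")
    case False
    then have "\<And>p. \<not> wg k (Suc n) S p" by (auto simp: wg_def)
    then show ?thesis using False by (simp add: Wg_def)
  next
    case True
    have key: "wg k (Suc n) S (q(Suc n := v)) \<longleftrightarrow>
          (if v = Max S then nol k n q else wg k n (S - {v}) q)"
      if v: "v \<in> S" and q: "q \<in> Bs n (S - {v})" for v q
    proof -
      have qv: "\<And>j. j \<in> {1..n} \<Longrightarrow> q j \<in> S - {v}" using q by (auto simp: Bs_def bij_betw_def)
      have last: "is_lrm (q(Suc n := v)) (Suc n) \<longleftrightarrow> v = Max S"
        using is_lrm_last[OF Suc.prems(1) v q] .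
      show ?thesis
      proof (cases "v = Max S")
        case vM: True
        have "wg k (Suc n) S (q(Suc n := v)) \<longleftrightarrow> nol k n q"
        proof
          assume "wg k (Suc n) S (q(Suc n := v))"
          then obtain j where j: "k < j" "j \<le> Suc n" "is_lrm (q(Suc n := v)) j"
            "\<forall>i. k < i \<and> i < j \<longrightarrow> \<not> is_lrm (q(Suc n := v)) i" "(q(Suc n := v)) j = Max S"
            unfolding wg_def by blast
          have "j = Suc n"
          proof (rule ccontr)
            assume "j \<noteq> Suc n"
            then have "j \<in> {1..n}" using j by auto
            then show False using qv[of j] j(5) vM \<open>j \<noteq> Suc n\<close> by auto
          qed
          then show "nol k n q" using j(4) unfolding nol_def by (auto simp: is_lrm_upd)
        next
          assume "nol k n q"
          then show "wg k (Suc n) S (q(Suc n := v))" unfolding wg_def nol_def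
            using True last vM by (intro exI[of _ "Suc n"]) (auto simp: is_lrm_upd)
        qed
        then show ?thesis using vM by simp
      next
        case vM: False
        have MM: "Max (S - {v}) = Max S" using Max_remove[OF Suc.prems(1) v vM] .
        have "wg k (Suc n) S (q(Suc n := v)) \<longleftrightarrow> wg k n (S - {v}) q"
        proof
          assume "wg k (Suc n) S (q(Suc n := v))"
          then obtain j where j: "k < j" "j \<le> Suc n" "is_lrm (q(Suc n := v)) j"
            "\<forall>i. k < i \<and> i < j \<longrightarrow> \<not> is_lrm (q(Suc n := v)) i" "(q(Suc n := v)) j = Max S"
            unfolding wg_def by blast
          have "j \<noteq> Suc n" using j(3) last vM by auto
          then have jn: "j \<le> n" using j by auto
          show "wg k n (S - {v}) q" unfolding wg_def MM
            using j jn \<open>j \<noteq> Suc n\<close> by (intro exI[of _ j]) (auto simp: is_lrm_upd)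
        next
          assume "wg k n (S - {v}) q"
          then obtain j where j: "k < j" "j \<le> n" "is_lrm q j"
            "\<forall>i. k < i \<and> i < j \<longrightarrow> \<not> is_lrm q i" "q j = Max S"
            unfolding wg_def MM by blast
          show "wg k (Suc n) S (q(Suc n := v))" unfolding wg_def
            using j by (intro exI[of _ j]) (auto simp: is_lrm_upd)
        qed
        then show ?thesis using vM by simp
      qed
    qed
    have "Wg k (Suc n) S = (\<Sum>v\<in>S. \<Sum>q\<in>Bs n (S - {v}).
        if wg k (Suc n) S (q(Suc n := v)) then t ^ lrm (Suc n) (q(Suc n := v)) else 0)"
      unfolding Wg_def using Suc.prems by (simp add: sum_Bs_Suc)
    also have "\<dots> = (\<Sum>v\<in>S. if v = Max S then t * Ag k n (S - {v}) else Wg k n (S - {v}))"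
      unfolding Ag_def Wg_def
    proof (intro sum.cong refl)
      fix v assume v: "v \<in> S"
      show "(\<Sum>q\<in>Bs n (S - {v}). if wg k (Suc n) S (q(Suc n := v)) then t ^ lrm (Suc n) (q(Suc n := v)) else 0)
          = (if v = Max S then t * (\<Sum>p\<in>Bs n (S - {v}). if nol k n p then t ^ lrm n p else 0)
             else \<Sum>p\<in>Bs n (S - {v}). if wg k n (S - {v}) p then t ^ lrm n p else 0)"
        using is_lrm_last[OF Suc.prems(1) v] key[OF v]
        by (auto simp: lrm_upd sum_distrib_left intro!: sum.cong)
    qed
    also have "\<dots> = t * Ac k n + (\<Sum>v\<in>S - {Max S}. Wc k n)"
    proof -
      have IHc: "Wg k n (S - {v}) = Wc k n" "Ag k n (S - {v}) = Ac k n" if "v \<in> S" for v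
        using Suc.prems that by (intro Suc.IH Ag_eq; auto)+
      show ?thesis using Suc.prems ne IHc by (subst sum_Max_split) auto
    qed
    also have "\<dots> = Wc k (Suc n)" using True Suc.prems ne by simp
    finally show ?thesis .
  qed
qed

lemma Bs_perm: "Bs N {1..N} = {p. p permutes {1..N}}"
  by (auto simp: Bs_def permutes_imp_bij permutes_not_in intro: bij_imp_permutes)

lemma W_eq: "W t N k = Wc k N"
proof (cases "k < N")
  case True
  have M: "Max {1..N} = N" using True by (simp add: Max_eq_iff)
  have "W t N k = (\<Sum>p\<in>{p. p permutes {1..N}} \<inter> {p. winnable N k p}. t ^ lrm N p)"
    using True by (simp add: W_def Int_def)
  also have "\<dots> = Wg k N {1..N}"
  proof -
    have fin: "finite {p. p permutes {1..N}}" by (simp add: finite_permutations)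
    have eqw: "winnable N k p \<longleftrightarrow> wg k N {1..N} p" for p unfolding winnable_def wg_def M by (rule refl)
    have "{p. p permutes {1..N}} \<inter> {p. winnable N k p} = {p \<in> {p. p permutes {1..N}}. wg k N {1..N} p}"
      by (auto simp: eqw)
    then show ?thesis unfolding Wg_def Bs_perm using sum.inter_filter[OF fin] by simp
  qed
  also have "\<dots> = Wc k N" by (simp add: Wg_eq)
  finally show ?thesis .
next
  case False
  then have "Wc k N = 0" by (cases N) auto
  then show ?thesis using False by (simp add: W_def)
qed

lemma Wc_zero: "n \<le> k \<Longrightarrow> Wc k n = 0"
  by (cases n) auto

lemma Ac_diff: "Ac (k+1) (k+1+m) - Ac k (k+1+m) = t * pochhammer t k * fact (k+m) / fact k"
proof (induction m)
  case 0 then show ?case by (simp add: Ac_le pochhammer_Suc algebra_simps)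
next
  case (Suc m)
  have "Ac (k+1) (k+1+Suc m) - Ac k (k+1+Suc m) = real (k+1+m) * (Ac (k+1) (k+1+m) - Ac k (k+1+m))"
    by (simp add: algebra_simps)
  also have "\<dots> = t * pochhammer t k * fact (k + Suc m) / fact k"
    using Suc by (simp add: algebra_simps)
  finally show ?case .
qed

end

theorem corollary4p4:
  fixes \<theta> :: real and k :: nat
  assumes "\<theta> > 0"
  shows "DeltaW \<theta> (k + 2) k = \<theta> * (\<theta> - real (k + 1)) * pochhammer \<theta> k
     \<and> (\<forall>N. N \<ge> k + 3 \<longrightarrow>
          DeltaW \<theta> N k = real (N - 1) * DeltaW \<theta> (N - 1) k
            + \<theta>^2 * (fact (N - 2) / fact k) * pochhammer \<theta> k)"
proof
  have "DeltaW \<theta> (k + 2) k = Wc \<theta> (k+1) (Suc (Suc k)) - Wc \<theta> k (Suc (Suc k))"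
    by (simp add: DeltaW_def W_eq)
  also have "\<dots> = \<theta> * (\<theta> - real (k + 1)) * pochhammer \<theta> k"
    by (simp add: Wc_zero Ac_le pochhammer_Suc algebra_simps)
  finally show "DeltaW \<theta> (k + 2) k = \<theta> * (\<theta> - real (k + 1)) * pochhammer \<theta> k" .
next
  show "\<forall>N. N \<ge> k + 3 \<longrightarrow>
          DeltaW \<theta> N k = real (N - 1) * DeltaW \<theta> (N - 1) k
            + \<theta>^2 * (fact (N - 2) / fact k) * pochhammer \<theta> k"
  proof (intro allI impI)
    fix N assume N: "N \<ge> k + 3"
    define m where "m = N - k - 2"
    have m: "N = Suc (k + 1 + m)" using N unfolding m_def by presburger
    have "DeltaW \<theta> N k = Wc \<theta> (k+1) (Suc (k+1+m)) - Wc \<theta> k (Suc (k+1+m))"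
      by (simp add: DeltaW_def W_eq m)
    also have "\<dots> = real (k+1+m) * (Wc \<theta> (k+1) (k+1+m) - Wc \<theta> k (k+1+m))
        + \<theta> * (Ac \<theta> (k+1) (k+1+m) - Ac \<theta> k (k+1+m))"
      by (simp add: algebra_simps)
    also have "\<dots> = real (N - 1) * DeltaW \<theta> (N - 1) k
            + \<theta>^2 * (fact (N - 2) / fact k) * pochhammer \<theta> k"
      unfolding Ac_diff by (simp add: DeltaW_def W_eq m power2_eq_square)
    finally show "DeltaW \<theta> N k = real (N - 1) * DeltaW \<theta> (N - 1) k
            + \<theta>^2 * (fact (N - 2) / fact k) * pochhammer \<theta> k" .
  qed
qed

end
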